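(* Let $D\ge 1$, let $K\ge 0$, let $v\in\mathbb{R}^D$ with $v\neq 0$, and let $\epsilon\in\mathbb{R}^D$. Decompose $\epsilon=\epsilon_\parallel+\epsilon_\perp$, where $\epsilon_\parallel$ is the orthogonal projection of $\epsilon$ onto $\mathrm{span}(v)$ and $\langle \epsilon_\perp, v\rangle=0$. Suppose $\|\epsilon_\perp\|\ge \|v\|$ and $\|\epsilon_\parallel\|\le K\|v\|$. Then $v+\epsilon\neq 0$ and \[ \left\| \frac{v + \epsilon}{\|v + \epsilon\|} - \frac{v}{\|v\|} \right\| \;\geq\; \frac{1}{\sqrt{(1+K)^2+1}} \;>\; 0 . \]
   Context: All norms and inner products are the standard Euclidean ones on $\mathbb{R}^D$. *)

theory Defs
  imports "HOL-Analysis.Analysis"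
begin

end

theory Submission
  imports Defs
begin

lemma pyth:
  fixes v p :: "'a::euclidean_space"
  assumes "p \<bullet> v = 0"
  shows "(norm (a *\<^sub>R v + b *\<^sub>R p))^2 = a^2 * (norm v)^2 + b^2 * (norm p)^2"
proof -
  have "(norm (a *\<^sub>R v + b *\<^sub>R p))^2 = (a *\<^sub>R v + b *\<^sub>R p) \<bullet> (a *\<^sub>R v + b *\<^sub>R p)"
    by (rule power2_norm_eq_inner)
  also have "\<dots> = a^2 * (v \<bullet> v) + b^2 * (p \<bullet> p)"
    using assms by (simp add: inner_add_left inner_add_right inner_commute power2_eq_square)
  finally show ?thesis by (simp add: power2_norm_eq_inner)
qed

theorem mainTheorem1:
  fixes v eps :: "'a::euclidean_space" and K :: real
  assumes "K \<ge> 0" and "v \<noteq> 0"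
  defines "eps_par \<equiv> ((eps \<bullet> v) / (v \<bullet> v)) *\<^sub>R v"
  defines "eps_perp \<equiv> eps - eps_par"
  assumes "norm eps_perp \<ge> norm v" and "norm eps_par \<le> K * norm v"
  shows "v + eps \<noteq> 0 \<and>
    norm ((1 / norm (v + eps)) *\<^sub>R (v + eps) - (1 / norm v) *\<^sub>R v) \<ge> 1 / sqrt ((1 + K)^2 + 1)
    \<and> 1 / sqrt ((1 + K)^2 + 1) > 0"
proof -
  define c where "c = (eps \<bullet> v) / (v \<bullet> v)"
  define p where "p = eps_perp"
  define n where "n = norm v"
  have n0: "n > 0" using assms(2) by (simp add: n_def)
  have vv: "v \<bullet> v = n^2" by (simp add: n_def power2_norm_eq_inner)
  have pv: "p \<bullet> v = 0" using n0 vv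
    by (simp add: p_def eps_perp_def eps_par_def inner_diff_left)
  have cK: "\<bar>c\<bar> \<le> K" using assms(6) n0
    by (simp add: eps_par_def c_def[symmetric] n_def[symmetric])
  have pn: "norm p \<ge> n" using assms(5) by (simp add: p_def n_def)
  have w: "v + eps = (1 + c) *\<^sub>R v + 1 *\<^sub>R p"
    by (simp add: p_def eps_perp_def eps_par_def c_def algebra_simps)
  define m where "m = norm (v + eps)"
  have m2: "m^2 = (1+c)^2 * n^2 + (norm p)^2"
    using pyth[OF pv, of "1+c" 1] w by (simp add: m_def n_def)
  have mpos: "m > 0" using m2 pn n0
    by (smt (verit) norm_ge_zero m_def power_mono zero_less_power2 zero_le_power2 mult_nonneg_nonneg)
  have ne: "v + eps \<noteq> 0" using mpos m_def by auto
  have x: "(1 / m) *\<^sub>R (v + eps) - (1 / n) *\<^sub>R v = ((1+c)/m - 1/n) *\<^sub>R v + (1/m) *\<^sub>R p"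
    unfolding w by (simp add: scaleR_add_right scaleR_diff_left add_divide_distrib algebra_simps)
  have x2: "(norm ((1 / m) *\<^sub>R (v + eps) - (1 / n) *\<^sub>R v))^2
      = ((1+c)/m - 1/n)^2 * n^2 + (1/m)^2 * (norm p)^2"
    unfolding x using pyth[OF pv] by (simp add: n_def)
  define S where "S = (1+K)^2 + 1"
  have S1: "S \<ge> 1" by (simp add: S_def)
  have c1: "(1+c)^2 \<le> (1+K)^2" using cK assms(1)
    by (smt (verit) power_mono abs_le_iff power2_abs)
  have key: "(1+c)^2 * n^2 \<le> (1+K)^2 * (norm p)^2"
    using c1 pn n0 by (meson mult_mono power_mono zero_le_power2 less_imp_le order_trans)
  have "m^2 \<le> S * (norm p)^2" using m2 key by (simp add: S_def algebra_simps)
  hence "1 / S \<le> (norm p)^2 / m^2" using mpos S1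
    by (simp add: field_simps)
  also have "\<dots> \<le> (norm ((1 / m) *\<^sub>R (v + eps) - (1 / n) *\<^sub>R v))^2"
    unfolding x2 by (simp add: power_divide)
  finally have h: "(1 / sqrt S)^2 \<le> (norm ((1 / m) *\<^sub>R (v + eps) - (1 / n) *\<^sub>R v))^2"
    using S1 by (simp add: power_divide)
  have "1 / sqrt S \<le> norm ((1 / m) *\<^sub>R (v + eps) - (1 / n) *\<^sub>R v)"
    using power2_le_imp_le[OF h] by simp
  moreover have "1 / sqrt S > 0" using S1 by simp
  ultimately show ?thesis using ne by (simp add: S_def m_def n_def)
qed

end
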